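(* Let $(M,\lambda,J)$ be a contact triad with triad metric $g$, $(\dot\Sigma,j)$ a Riemann surface with boundary, and $w:\dot\Sigma\to M$ a map with $\bar\partial^\pi w=0$ such that a boundary arc of $\dot\Sigma$ is mapped into a Legendrian submanifold $R_i$. Let $z=x+iy$ be isothermal coordinates on a half-disc neighborhood of a point of this arc, with the boundary given by $\{y=0\}$ and $\partial/\partial x$ tangent to the boundary. Then along the boundary, $w$ satisfies the Neumann boundary condition $\frac{\partial w}{\partial y}\perp TR_i$ with respect to $g$.
   Context: Contact triad $(M,\lambda,J)$: contact form $\lambda$ on a $(2n+1)$-manifold, $\xi=\ker\lambda$, Reeb field $R_\lambda$, $\Pi:TM\to\xi$ projection along $R_\lambda$, $J$ endomorphism with $JR_\lambda=0$, $(J|_\xi)^2=-\mathrm{id}$, $d\lambda(Y,JY)>0$ for $0\ne Y\in\xi$; triad metric $g=d\lambda(\cdot,J\cdot)|_\xi+\lambda\otimes\lambda$. $\bar\partial^\pi w=\frac12(\Pi dw+J\,\Pi dw\circ j)$. Legendrian: $n$-dimensional submanifold with $TR\subset\xi$. Isothermal coordinates: conformal coordinates with $j\partial_x=\partial_y$. *)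

theory Defs
  imports "HOL-Analysis.Analysis"
begin

text \<open>C^k and C^infinity regularity of a map on a set S (derivatives taken within S,
  so that smoothness up to the boundary of e.g. a closed half-disc is covered).\<close>
fun Ck_on :: "nat \<Rightarrow> 'a::real_normed_vector set \<Rightarrow> ('a \<Rightarrow> 'b::real_normed_vector) \<Rightarrow> bool" where
  "Ck_on 0 S f = continuous_on S f"
| "Ck_on (Suc k) S f = (\<exists>D. (\<forall>x\<in>S. (f has_derivative D x) (at x within S)) \<and>
                            (\<forall>v. Ck_on k S (\<lambda>x. D x v)))"

definition smooth_on :: "'a::real_normed_vector set \<Rightarrow> ('a \<Rightarrow> 'b::real_normed_vector) \<Rightarrow> bool" where
  "smooth_on S f \<longleftrightarrow> (\<forall>k. Ck_on k S f)"

text \<open>A 1-form on (an open chart domain in) the manifold is given by a vector field alpha: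
  lambda_p(v) = alpha p \<bullet> v.\<close>
definition form_app :: "('a::euclidean_space \<Rightarrow> 'a) \<Rightarrow> 'a \<Rightarrow> 'a \<Rightarrow> real" where
  "form_app \<alpha> p v = \<alpha> p \<bullet> v"

definition dform :: "('a::euclidean_space \<Rightarrow> 'a) \<Rightarrow> 'a \<Rightarrow> 'a \<Rightarrow> 'a \<Rightarrow> real" where
  "dform \<alpha> p Y Z = frechet_derivative \<alpha> (at p) Y \<bullet> Z - frechet_derivative \<alpha> (at p) Z \<bullet> Y"

definition contact_distr :: "('a::euclidean_space \<Rightarrow> 'a) \<Rightarrow> 'a \<Rightarrow> 'a set" where
  "contact_distr \<alpha> p = {v. form_app \<alpha> p v = 0}"

text \<open>Contact form on the open set U: smooth, nowhere vanishing, and d lambda nondegenerate on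
  ker lambda (equivalent to lambda \<and> (d lambda)^n \<noteq> 0), in dimension 2n+1.\<close>
definition contact_form :: "nat \<Rightarrow> 'a::euclidean_space set \<Rightarrow> ('a \<Rightarrow> 'a) \<Rightarrow> bool" where
  "contact_form n U \<alpha> \<longleftrightarrow> open U \<and> DIM('a) = 2 * n + 1 \<and> smooth_on U \<alpha> \<and>
     (\<forall>p\<in>U. \<alpha> p \<noteq> 0 \<and>
        (\<forall>Y\<in>contact_distr \<alpha> p. Y \<noteq> 0 \<longrightarrow> (\<exists>Z\<in>contact_distr \<alpha> p. dform \<alpha> p Y Z \<noteq> 0)))"

definition reeb_field :: "'a::euclidean_space set \<Rightarrow> ('a \<Rightarrow> 'a) \<Rightarrow> ('a \<Rightarrow> 'a) \<Rightarrow> bool" where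
  "reeb_field U \<alpha> R \<longleftrightarrow> (\<forall>p\<in>U. form_app \<alpha> p (R p) = 1 \<and> (\<forall>Z. dform \<alpha> p (R p) Z = 0))"

definition proj_xi :: "('a::euclidean_space \<Rightarrow> 'a) \<Rightarrow> ('a \<Rightarrow> 'a) \<Rightarrow> 'a \<Rightarrow> 'a \<Rightarrow> 'a" where
  "proj_xi \<alpha> R p v = v - form_app \<alpha> p v *\<^sub>R R p"

text \<open>Contact triad (M, lambda, J), M represented by an open coordinate domain U:
  J smooth endomorphism field, J R = 0, J preserves xi, (J|xi)^2 = -id,
  d lambda(Y,JY) > 0 on xi, and d lambda(.,J.)|xi symmetric (so the triad metric is a metric).\<close>
definition contact_triad :: "nat \<Rightarrow> 'a::euclidean_space set \<Rightarrow> ('a \<Rightarrow> 'a) \<Rightarrow> ('a \<Rightarrow> 'a)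
     \<Rightarrow> ('a \<Rightarrow> 'a \<Rightarrow> 'a) \<Rightarrow> bool" where
  "contact_triad n U \<alpha> R J \<longleftrightarrow> contact_form n U \<alpha> \<and> reeb_field U \<alpha> R \<and>
     (\<forall>v. smooth_on U (\<lambda>p. J p v)) \<and>
     (\<forall>p\<in>U. linear (J p) \<and> J p (R p) = 0 \<and>
        (\<forall>Y\<in>contact_distr \<alpha> p. J p Y \<in> contact_distr \<alpha> p \<and> J p (J p Y) = - Y \<and>
            (Y \<noteq> 0 \<longrightarrow> dform \<alpha> p Y (J p Y) > 0)) \<and>
        (\<forall>Y\<in>contact_distr \<alpha> p. \<forall>Z\<in>contact_distr \<alpha> p. dform \<alpha> p Y (J p Z) = dform \<alpha> p Z (J p Y)))"

definition triad_metric :: "('a::euclidean_space \<Rightarrow> 'a) \<Rightarrow> ('a \<Rightarrow> 'a) \<Rightarrow> ('a \<Rightarrow> 'a \<Rightarrow> 'a)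
     \<Rightarrow> 'a \<Rightarrow> 'a \<Rightarrow> 'a \<Rightarrow> real" where
  "triad_metric \<alpha> R J p Y Z =
     dform \<alpha> p (proj_xi \<alpha> R p Y) (J p (proj_xi \<alpha> R p Z)) + form_app \<alpha> p Y * form_app \<alpha> p Z"

definition submfd_chart :: "'a::euclidean_space set \<Rightarrow> 'a set \<Rightarrow> 'b::euclidean_space set \<Rightarrow> ('b \<Rightarrow> 'a) \<Rightarrow> bool" where
  "submfd_chart L V W \<phi> \<longleftrightarrow> open V \<and> open W \<and> smooth_on W \<phi> \<and> \<phi> ` W = L \<inter> V \<and>
     inj_on \<phi> W \<and> continuous_on (L \<inter> V) (inv_into W \<phi>) \<and>
     (\<forall>u\<in>W. inj (frechet_derivative \<phi> (at u)))"

definition embedded_submanifold :: "'b::euclidean_space itself \<Rightarrow> 'a::euclidean_space set \<Rightarrow> bool" where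
  "embedded_submanifold _ L \<longleftrightarrow>
     (\<forall>p\<in>L. \<exists>V (W::'b set) \<phi>. p \<in> V \<and> submfd_chart L V W \<phi>)"

definition tangent_space :: "'b::euclidean_space itself \<Rightarrow> 'a::euclidean_space set \<Rightarrow> 'a \<Rightarrow> 'a set" where
  "tangent_space _ L p = {v. \<exists>V (W::'b set) \<phi> u. submfd_chart L V W \<phi> \<and> u \<in> W \<and> \<phi> u = p \<and>
                              v \<in> range (frechet_derivative \<phi> (at u))}"

definition legendrian :: "'b::euclidean_space itself \<Rightarrow> 'a::euclidean_space set \<Rightarrow> ('a \<Rightarrow> 'a) \<Rightarrow> 'a set \<Rightarrow> bool" where
  "legendrian B U \<alpha> L \<longleftrightarrow> L \<subseteq> U \<and> embedded_submanifold B L \<and>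
     (\<forall>p\<in>L. tangent_space B L p \<subseteq> contact_distr \<alpha> p)"

end

theory Submission
  imports Defs
begin


lemma line_deriv:
  assumes "(G has_derivative G') (at (a + s *\<^sub>R h))"
  shows "((\<lambda>s. G (a + s *\<^sub>R h)) has_real_derivative G' h) (at s)"
proof -
  have l: "((\<lambda>s. a + s *\<^sub>R h) has_derivative (\<lambda>s. s *\<^sub>R h)) (at s)"
    by (auto intro!: derivative_eq_intros)
  have "((G \<circ> (\<lambda>s. a + s *\<^sub>R h)) has_derivative (G' \<circ> (\<lambda>s. s *\<^sub>R h))) (at s)"
    by (rule diff_chain_at[OF l]) (use assms in simp)
  moreover have "G' \<circ> (\<lambda>s. s *\<^sub>R h) = (*) (G' h)"
    using has_derivative_bounded_linear[OF assms]
    by (auto simp: fun_eq_iff linear_simps(5) bounded_linear.linear)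
  ultimately show ?thesis unfolding has_field_derivative_def by (simp add: o_def)
qed

lemma mixed_mvt:
  fixes F :: "'b::real_normed_vector \<Rightarrow> real"
  assumes dF: "\<And>x. x\<in>W \<Longrightarrow> (F has_derivative DF x) (at x)"
   and d2: "\<And>x h. x\<in>W \<Longrightarrow> ((\<lambda>y. DF y h) has_derivative D2 x h) (at x)"
   and t: "t > 0"
   and box: "\<And>s \<tau>. 0 \<le> s \<Longrightarrow> s \<le> t \<Longrightarrow> 0 \<le> \<tau> \<Longrightarrow> \<tau> \<le> t \<Longrightarrow> u + s *\<^sub>R h + \<tau> *\<^sub>R k \<in> W"
  shows "\<exists>s \<tau>. 0 \<le> s \<and> s \<le> t \<and> 0 \<le> \<tau> \<and> \<tau> \<le> t \<and>
     F (u + t *\<^sub>R h + t *\<^sub>R k) - F (u + t *\<^sub>R h) - F (u + t *\<^sub>R k) + F u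
       = t * t * D2 (u + s *\<^sub>R h + \<tau> *\<^sub>R k) h k"
proof -
  define \<phi> where "\<phi> s = F ((u + t *\<^sub>R k) + s *\<^sub>R h) - F (u + s *\<^sub>R h)" for s
  have "(\<phi> has_real_derivative (DF (u + s *\<^sub>R h + t *\<^sub>R k) h - DF (u + s *\<^sub>R h) h)) (at s)"
    if "0 \<le> s" "s \<le> t" for s
  proof -
    have 1: "u + t *\<^sub>R k + s *\<^sub>R h \<in> W" using box[of s t] that t by (simp add: algebra_simps)
    have 2: "u + s *\<^sub>R h \<in> W" using box[of s 0] that t by simp
    show ?thesis unfolding \<phi>_def
      apply (rule DERIV_diff)
      using line_deriv[OF dF[OF 1]] line_deriv[OF dF[OF 2]] by (simp_all add: algebra_simps)
  qed
  note der1 = this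
  obtain \<sigma> where \<sigma>: "0 < \<sigma>" "\<sigma> < t"
    "\<phi> t - \<phi> 0 = (t - 0) * (DF (u + \<sigma> *\<^sub>R h + t *\<^sub>R k) h - DF (u + \<sigma> *\<^sub>R h) h)"
    using MVT2[OF t, of \<phi> "\<lambda>s. DF (u + s *\<^sub>R h + t *\<^sub>R k) h - DF (u + s *\<^sub>R h) h"] der1 by auto
  define \<psi> where "\<psi> \<tau> = DF ((u + \<sigma> *\<^sub>R h) + \<tau> *\<^sub>R k) h" for \<tau>
  have "(\<psi> has_real_derivative D2 (u + \<sigma> *\<^sub>R h + \<tau> *\<^sub>R k) h k) (at \<tau>)"
    if "0 \<le> \<tau>" "\<tau> \<le> t" for \<tau>
  proof -
    have 1: "u + \<sigma> *\<^sub>R h + \<tau> *\<^sub>R k \<in> W" using box[of \<sigma> \<tau>] that \<sigma> by simp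
    show ?thesis unfolding \<psi>_def using line_deriv[OF d2[OF 1]] by simp
  qed
  note der2 = this
  obtain \<tau> where \<tau>: "0 < \<tau>" "\<tau> < t"
    "\<psi> t - \<psi> 0 = (t - 0) * D2 (u + \<sigma> *\<^sub>R h + \<tau> *\<^sub>R k) h k"
    using MVT2[OF t, of \<psi> "\<lambda>\<tau>. D2 (u + \<sigma> *\<^sub>R h + \<tau> *\<^sub>R k) h k"] der2 by auto
  have "F (u + t *\<^sub>R h + t *\<^sub>R k) - F (u + t *\<^sub>R h) - F (u + t *\<^sub>R k) + F u = \<phi> t - \<phi> 0"
    by (simp add: \<phi>_def algebra_simps)
  also have "\<dots> = t * (\<psi> t - \<psi> 0)" using \<sigma>(3) by (simp add: \<psi>_def algebra_simps)
  also have "\<dots> = t * t * D2 (u + \<sigma> *\<^sub>R h + \<tau> *\<^sub>R k) h k" using \<tau>(3) by simp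
  finally show ?thesis using \<sigma> \<tau> by (intro exI[of _ \<sigma>] exI[of _ \<tau>]) auto
qed

lemma schwarz_real:
  fixes F :: "'b::real_normed_vector \<Rightarrow> real"
  assumes W: "open W" "u \<in> W"
   and dF: "\<And>x. x\<in>W \<Longrightarrow> (F has_derivative DF x) (at x)"
   and d2: "\<And>x h. x\<in>W \<Longrightarrow> ((\<lambda>y. DF y h) has_derivative D2 x h) (at x)"
   and cont: "\<And>h k. continuous_on W (\<lambda>x. D2 x h k)"
  shows "D2 u h k = D2 u k h"
proof -
  have "\<bar>D2 u h k - D2 u k h\<bar> \<le> 2 * e" if e: "e > 0" for e
  proof -
    have c1: "continuous (at u) (\<lambda>x. D2 x h k)" "continuous (at u) (\<lambda>x. D2 x k h)"
      using cont W continuous_on_eq_continuous_at by blast+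
    obtain d1 where d1: "d1 > 0" "\<And>x. dist x u < d1 \<Longrightarrow> dist (D2 x h k) (D2 u h k) < e"
      using c1(1) e unfolding continuous_at_eps_delta by blast
    obtain d2 where d2': "d2 > 0" "\<And>x. dist x u < d2 \<Longrightarrow> dist (D2 x k h) (D2 u k h) < e"
      using c1(2) e unfolding continuous_at_eps_delta by blast
    obtain d3 where d3: "d3 > 0" "ball u d3 \<subseteq> W"
      using W open_contains_ball by blast
    define d where "d = min d1 (min d2 d3)"
    have d: "d > 0" "d \<le> d1" "d \<le> d2" "d \<le> d3" using d1 d2' d3 by (auto simp: d_def)
    define t where "t = d / (2 * (norm h + norm k + 1))"
    have "2 * (norm h + norm k + 1) > 0" by (smt (verit) norm_ge_zero)
    then have t: "t > 0" using d unfolding t_def by (intro divide_pos_pos) auto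
    have small: "dist (u + s *\<^sub>R a + \<tau> *\<^sub>R b) u < d"
      if "0 \<le> s" "s \<le> t" "0 \<le> \<tau>" "\<tau> \<le> t" "norm a + norm b = norm h + norm k" for s \<tau> a b
    proof -
      have "dist (u + s *\<^sub>R a + \<tau> *\<^sub>R b) u = norm (s *\<^sub>R a + \<tau> *\<^sub>R b)"
        by (simp add: dist_norm)
      also have "\<dots> \<le> s * norm a + \<tau> * norm b"
        using norm_triangle_ineq[of "s *\<^sub>R a" "\<tau> *\<^sub>R b"] that by simp
      also have "\<dots> \<le> t * norm a + t * norm b"
        using that by (intro add_mono mult_right_mono) auto
      also have "\<dots> = t * (norm h + norm k)" using that by (metis distrib_left)
      also have "\<dots> < d"
      proof -
        have "t * (norm h + norm k) < t * (2 * (norm h + norm k + 1))"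
          using t by (intro mult_strict_left_mono) (auto, smt (verit) norm_ge_zero)
        also have "\<dots> = d" unfolding t_def using \<open>2 * (norm h + norm k + 1) > 0\<close> by simp
        finally show ?thesis .
      qed
      finally show ?thesis .
    qed
    have inW: "u + s *\<^sub>R a + \<tau> *\<^sub>R b \<in> W"
      if "0 \<le> s" "s \<le> t" "0 \<le> \<tau>" "\<tau> \<le> t" "norm a + norm b = norm h + norm k" for s \<tau> a b
      using small[OF that] d d3 by (auto simp: dist_commute)
    have boxA: "\<And>s \<tau>. 0 \<le> s \<Longrightarrow> s \<le> t \<Longrightarrow> 0 \<le> \<tau> \<Longrightarrow> \<tau> \<le> t \<Longrightarrow> u + s *\<^sub>R h + \<tau> *\<^sub>R k \<in> W"
      by (rule inW) auto
    have boxB: "\<And>s \<tau>. 0 \<le> s \<Longrightarrow> s \<le> t \<Longrightarrow> 0 \<le> \<tau> \<Longrightarrow> \<tau> \<le> t \<Longrightarrow> u + s *\<^sub>R k + \<tau> *\<^sub>R h \<in> W"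
      by (rule inW) (auto simp: add.commute)
    obtain s1 \<tau>1 where A: "0 \<le> s1" "s1 \<le> t" "0 \<le> \<tau>1" "\<tau>1 \<le> t"
      "F (u + t *\<^sub>R h + t *\<^sub>R k) - F (u + t *\<^sub>R h) - F (u + t *\<^sub>R k) + F u
       = t * t * D2 (u + s1 *\<^sub>R h + \<tau>1 *\<^sub>R k) h k"
      using mixed_mvt[OF dF d2 t boxA] by blast
    obtain s2 \<tau>2 where B: "0 \<le> s2" "s2 \<le> t" "0 \<le> \<tau>2" "\<tau>2 \<le> t"
      "F (u + t *\<^sub>R k + t *\<^sub>R h) - F (u + t *\<^sub>R k) - F (u + t *\<^sub>R h) + F u
       = t * t * D2 (u + s2 *\<^sub>R k + \<tau>2 *\<^sub>R h) k h"
      using mixed_mvt[OF dF d2 t boxB] by blast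
    have eq: "D2 (u + s1 *\<^sub>R h + \<tau>1 *\<^sub>R k) h k = D2 (u + s2 *\<^sub>R k + \<tau>2 *\<^sub>R h) k h"
    proof -
      have "t * t * D2 (u + s1 *\<^sub>R h + \<tau>1 *\<^sub>R k) h k = t * t * D2 (u + s2 *\<^sub>R k + \<tau>2 *\<^sub>R h) k h"
        using A(5) B(5) by (simp add: algebra_simps)
      then show ?thesis using t by simp
    qed
    have "\<bar>D2 (u + s1 *\<^sub>R h + \<tau>1 *\<^sub>R k) h k - D2 u h k\<bar> < e"
      using d1(2)[of "u + s1 *\<^sub>R h + \<tau>1 *\<^sub>R k"] small[OF A(1-4), of h k] d by (simp add: dist_real_def)
    moreover have "\<bar>D2 (u + s2 *\<^sub>R k + \<tau>2 *\<^sub>R h) k h - D2 u k h\<bar> < e"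
      using d2'(2)[of "u + s2 *\<^sub>R k + \<tau>2 *\<^sub>R h"] small[OF B(1-4), of k h] d by (simp add: dist_real_def add.commute)
    ultimately show ?thesis using eq by linarith
  qed
  note * = this
  show ?thesis
  proof (rule ccontr)
    assume "D2 u h k \<noteq> D2 u k h"
    then have "\<bar>D2 u h k - D2 u k h\<bar> > 0" by simp
    from *[OF divide_pos_pos[OF this, of 4]] this show False by simp
  qed
qed

lemma smooth_C2:
  assumes "smooth_on S f" "open S"
  obtains D1 D2 where "\<And>x. x\<in>S \<Longrightarrow> (f has_derivative D1 x) (at x)"
    "\<And>x h. x\<in>S \<Longrightarrow> ((\<lambda>y. D1 y h) has_derivative D2 x h) (at x)"
    "\<And>h k. continuous_on S (\<lambda>x. D2 x h k)"
proof -
  have "Ck_on (Suc (Suc 0)) S f" using assms(1) unfolding smooth_on_def by blast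
  then have "\<exists>D1. (\<forall>x\<in>S. (f has_derivative D1 x) (at x within S)) \<and> (\<forall>v. Ck_on (Suc 0) S (\<lambda>x. D1 x v))"
    by (simp only: Ck_on.simps(2))
  then obtain D1 where D1: "\<forall>x\<in>S. (f has_derivative D1 x) (at x within S)"
    and R0: "\<forall>v. Ck_on (Suc 0) S (\<lambda>x. D1 x v)" by blast
  have R: "\<forall>v. \<exists>D'. (\<forall>x\<in>S. ((\<lambda>x. D1 x v) has_derivative D' x) (at x within S)) \<and>
                 (\<forall>va. continuous_on S (\<lambda>x. D' x va))"
  proof
    fix v
    from R0 have "Ck_on (Suc 0) S (\<lambda>x. D1 x v)" ..
    then show "\<exists>D'. (\<forall>x\<in>S. ((\<lambda>x. D1 x v) has_derivative D' x) (at x within S)) \<and>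
                 (\<forall>va. continuous_on S (\<lambda>x. D' x va))"
      by (simp only: Ck_on.simps)
  qed
  define P where "P = (\<lambda>G. \<forall>v. (\<forall>x\<in>S. ((\<lambda>x. D1 x v) has_derivative G v x) (at x within S)) \<and>
                 (\<forall>va. continuous_on S (\<lambda>x. G v x va)))"
  have "\<exists>G. P G" unfolding P_def by (rule choice[OF R])
  then have "P (SOME G. P G)" by (rule someI_ex)
  then obtain G where G: "\<forall>v. (\<forall>x\<in>S. ((\<lambda>x. D1 x v) has_derivative G v x) (at x within S)) \<and>
                 (\<forall>va. continuous_on S (\<lambda>x. G v x va))" unfolding P_def by blast
  have Gd: "\<And>v x. x\<in>S \<Longrightarrow> ((\<lambda>x. D1 x v) has_derivative G v x) (at x within S)"
    using G by blast
  have Gc: "\<And>v va. continuous_on S (\<lambda>x. G v x va)" using G by blast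
  have D1': "\<And>x. x\<in>S \<Longrightarrow> (f has_derivative D1 x) (at x within S)" using D1 by blast
  show ?thesis
  proof (rule that[of D1 "\<lambda>x h. G h x"])
    show "(f has_derivative D1 x) (at x)" if "x \<in> S" for x
    proof -
      have e: "at x within S = at x" by (rule at_within_open[OF that assms(2)])
      show ?thesis using D1'[OF that] unfolding e .
    qed
    show "((\<lambda>y. D1 y h) has_derivative G h x) (at x)" if "x \<in> S" for x h
    proof -
      have e: "at x within S = at x" by (rule at_within_open[OF that assms(2)])
      show ?thesis using Gd[OF that] unfolding e .
    qed
    show "continuous_on S (\<lambda>x. G h x k)" for h k by (rule Gc)
  qed
qed

lemma isotropic:
  fixes \<phi> :: "'b::euclidean_space \<Rightarrow> 'a::euclidean_space"
  assumes sm: "smooth_on W \<phi>" and W: "open W" "u \<in> W"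
   and da: "(\<alpha> has_derivative Da) (at (\<phi> u))"
   and iso: "\<forall>x\<in>W. \<forall>h. \<alpha> (\<phi> x) \<bullet> frechet_derivative \<phi> (at x) h = 0"
  shows "Da (frechet_derivative \<phi> (at u) k) \<bullet> frechet_derivative \<phi> (at u) h
       = Da (frechet_derivative \<phi> (at u) h) \<bullet> frechet_derivative \<phi> (at u) k"
proof -
  obtain D1 D2 where D1: "\<And>x. x\<in>W \<Longrightarrow> (\<phi> has_derivative D1 x) (at x)"
    and D2: "\<And>x h. x\<in>W \<Longrightarrow> ((\<lambda>y. D1 y h) has_derivative D2 x h) (at x)"
    and C: "\<And>h k. continuous_on W (\<lambda>x. D2 x h k)"
    using smooth_C2[OF sm W(1)] by blast
  have fd: "frechet_derivative \<phi> (at x) = D1 x" if "x \<in> W" for x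
    using frechet_derivative_at[OF D1[OF that]] by simp
  define e where "e = \<alpha> (\<phi> u)"
  have key: "e \<bullet> D2 u h k + Da (D1 u k) \<bullet> D1 u h = 0" for h k
  proof -
    have c: "((\<lambda>x. \<alpha> (\<phi> x)) has_derivative (\<lambda>k. Da (D1 u k))) (at u)"
      using diff_chain_at[OF D1[OF W(2)] da] by (simp add: o_def)
    have d: "((\<lambda>x. \<alpha> (\<phi> x) \<bullet> D1 x h) has_derivative
               (\<lambda>k. \<alpha> (\<phi> u) \<bullet> D2 u h k + Da (D1 u k) \<bullet> D1 u h)) (at u)"
      using has_derivative_inner[OF c D2[OF W(2)]] by simp
    have z: "((\<lambda>x. \<alpha> (\<phi> x) \<bullet> D1 x h) has_derivative (\<lambda>k. 0)) (at u)"
    proof (rule has_derivative_transform_within_open[OF _ W])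
      show "((\<lambda>x. 0) has_derivative (\<lambda>k. 0)) (at u)" by simp
      show "0 = \<alpha> (\<phi> x) \<bullet> D1 x h" if "x \<in> W" for x
      proof -
        have "\<alpha> (\<phi> x) \<bullet> frechet_derivative \<phi> (at x) h = 0" using iso that by blast
        then show ?thesis unfolding fd[OF that] by simp
      qed
    qed
    from fun_cong[OF has_derivative_unique[OF d z], of k] show ?thesis by (simp add: e_def)
  qed
  have sF: "((\<lambda>x. e \<bullet> \<phi> x) has_derivative (\<lambda>h. e \<bullet> D1 x h)) (at x)" if "x \<in> W" for x
    using has_derivative_inner_right[OF D1[OF that]] by simp
  have sD: "((\<lambda>y. e \<bullet> D1 y h) has_derivative (\<lambda>k. e \<bullet> D2 x h k)) (at x)" if "x \<in> W" for x h
    using has_derivative_inner_right[OF D2[OF that]] by simp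
  have sC: "continuous_on W (\<lambda>x. e \<bullet> D2 x h k)" for h k
    by (intro continuous_intros C)
  have sym: "e \<bullet> D2 u h k = e \<bullet> D2 u k h" for h k
    using schwarz_real[OF W sF sD sC] by simp
  have "Da (D1 u k) \<bullet> D1 u h = Da (D1 u h) \<bullet> D1 u k"
    using key[of h k] key[of k h] sym[of h k] by linarith
  then show ?thesis using fd[OF W(2)] by simp
qed



lemma curve_tangent:
  fixes \<phi> :: "'b::euclidean_space \<Rightarrow> 'a::euclidean_space" and \<gamma> :: "real \<Rightarrow> 'a" and c :: "real \<Rightarrow> 'b"
  assumes dphi: "(\<phi> has_derivative A) (at u)" and injA: "inj A"
   and dg: "(\<gamma> has_derivative (\<lambda>s. s *\<^sub>R g)) (at t0)"
   and cc: "continuous (at t0) c" and c0: "c t0 = u"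
   and T: "open T" "t0 \<in> T" "\<And>t. t \<in> T \<Longrightarrow> \<gamma> t = \<phi> (c t)"
  shows "g \<in> range A"
proof -
  have linA: "linear A" using has_derivative_linear[OF dphi] .
  obtain m where m: "m > 0" "\<And>x. m * norm x \<le> norm (A x)"
    using linear_inj_bounded_below_pos[OF linA injA] by blast
  have "closed (range A)"
    by (intro closed_subspace linear_subspace_image linA subspace_UNIV)
  moreover have "g \<in> closure (range A)"
    unfolding closure_approachable_le
  proof (intro allI impI)
    fix \<epsilon> :: real assume \<epsilon>: "\<epsilon> > 0"
    define G where "G = norm g + 1"
    have G: "G > 0" "norm g \<le> G" unfolding G_def using norm_ge_zero[of g] by linarith+
    define e2 where "e2 = min 1 (\<epsilon>/2)"
    define e1 where "e1 = min (m/2) (\<epsilon> * m / (4 * G))"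
    have e2: "e2 > 0" "e2 \<le> 1" "e2 \<le> \<epsilon>/2" using \<epsilon> by (auto simp: e2_def)
    have e1: "e1 > 0" "e1 \<le> m/2" "e1 \<le> \<epsilon> * m / (4 * G)" using \<epsilon> m G by (auto simp: e1_def)
    obtain d1 where d1: "d1 > 0" "\<And>y. norm (y - u) < d1 \<Longrightarrow> norm (\<phi> y - \<phi> u - A (y - u)) \<le> e1 * norm (y - u)"
      using dphi e1(1) unfolding has_derivative_at_alt by blast
    obtain d2 where d2: "d2 > 0" "\<And>t. norm (t - t0) < d2 \<Longrightarrow> norm (\<gamma> t - \<gamma> t0 - (t - t0) *\<^sub>R g) \<le> e2 * norm (t - t0)"
      using dg e2(1) unfolding has_derivative_at_alt by blast
    obtain d3 where d3: "d3 > 0" "\<And>t. dist t t0 < d3 \<Longrightarrow> dist (c t) (c t0) < d1"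
      using cc d1(1) unfolding continuous_at_eps_delta by blast
    obtain d4 where d4: "d4 > 0" "ball t0 d4 \<subseteq> T"
      using T(1,2) open_contains_ball by blast
    define s where "s = min d2 (min d3 d4) / 2"
    have s: "s > 0" "s < d2" "s < d3" "s < d4" using d2 d3 d4 by (auto simp: s_def)
    define t where "t = t0 + s"
    have ts: "t - t0 = s" by (simp add: t_def)
    have tT: "t \<in> T" using d4(2) s by (auto simp: t_def dist_norm)
    define y where "y = c t - u"
    define E where "E = \<phi> (c t) - \<phi> u - A y"
    have yd1: "norm (c t - u) < d1" using d3(2)[of t] s c0 by (simp add: t_def dist_norm)
    have E: "norm E \<le> e1 * norm y" using d1(2)[OF yd1] by (simp add: E_def y_def)
    have gam: "\<gamma> t - \<gamma> t0 = A y + E"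
      using T(3)[OF tT] T(3)[OF T(2)] c0 by (simp add: E_def)
    have g2: "norm (\<gamma> t - \<gamma> t0 - s *\<^sub>R g) \<le> e2 * s"
      using d2(2)[of t] s by (simp add: ts)
    have gs: "norm (\<gamma> t - \<gamma> t0) \<le> s * G"
    proof -
      have "norm (\<gamma> t - \<gamma> t0) \<le> norm (\<gamma> t - \<gamma> t0 - s *\<^sub>R g) + norm (s *\<^sub>R g)"
        using norm_triangle_ineq[of "\<gamma> t - \<gamma> t0 - s *\<^sub>R g" "s *\<^sub>R g"] by simp
      also have "\<dots> \<le> e2 * s + s * norm g" using g2 s by simp
      also have "\<dots> \<le> s * G" using e2 G s unfolding G_def by (simp add: algebra_simps)
      finally show ?thesis .
    qed
    have ybound: "m * norm y \<le> 2 * (s * G)"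
    proof -
      have "m * norm y \<le> norm (A y)" by (rule m(2))
      also have "\<dots> \<le> norm (\<gamma> t - \<gamma> t0) + norm E"
        using norm_triangle_ineq4[of "\<gamma> t - \<gamma> t0" E] gam by simp
      also have "\<dots> \<le> s * G + (m/2) * norm y"
        using gs E e1(2) mult_right_mono[OF e1(2) norm_ge_zero[of y]] by linarith
      finally show ?thesis by simp
    qed
    have Eb: "norm E \<le> (\<epsilon>/2) * s"
    proof -
      have "norm E \<le> e1 * norm y" by (rule E)
      also have "\<dots> \<le> (\<epsilon> * m / (4 * G)) * norm y" using mult_right_mono[OF e1(3) norm_ge_zero[of y]] .
      also have "\<dots> = (\<epsilon> / (4 * G)) * (m * norm y)" by simp
      also have "\<dots> \<le> (\<epsilon> / (4 * G)) * (2 * (s * G))"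
        using ybound \<epsilon> G by (intro mult_left_mono) auto
      also have "\<dots> = (\<epsilon>/2) * s" using G by (simp add: field_simps)
      finally show ?thesis .
    qed
    show "\<exists>z\<in>range A. dist z g \<le> \<epsilon>"
    proof (intro bexI)
      show "A ((1/s) *\<^sub>R y) \<in> range A" by simp
      have "A ((1/s) *\<^sub>R y) - g = (1/s) *\<^sub>R (\<gamma> t - \<gamma> t0 - s *\<^sub>R g - E)"
        using gam s linear_cmul[OF linA] by (simp add: algebra_simps)
      then have "dist (A ((1/s) *\<^sub>R y)) g = (1/s) * norm (\<gamma> t - \<gamma> t0 - s *\<^sub>R g - E)"
        using s by (simp add: dist_norm)
      also have "\<dots> \<le> (1/s) * (e2 * s + (\<epsilon>/2) * s)"
        using norm_triangle_ineq4[of "\<gamma> t - \<gamma> t0 - s *\<^sub>R g" E] g2 Eb s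
        by (intro mult_left_mono) auto
      also have "\<dots> = e2 + \<epsilon>/2" using s by (simp add: field_simps)
      also have "\<dots> \<le> \<epsilon>" using e2 by simp
      finally show "dist (A ((1/s) *\<^sub>R y)) g \<le> \<epsilon>" .
    qed
  qed
  ultimately show ?thesis by (simp add: closure_closed)
qed


lemma curve_deriv:
  fixes w :: "complex \<Rightarrow> 'a::real_normed_vector"
  assumes "(w has_derivative D) (at (complex_of_real t) within H)"
    and "open I" "t \<in> I" "complex_of_real ` I \<subseteq> H"
  shows "((\<lambda>s. w (complex_of_real s)) has_derivative (\<lambda>s. s *\<^sub>R D 1)) (at t)"
proof -
  have o: "(complex_of_real has_derivative complex_of_real) (at t within I)"
    using has_derivative_of_real[OF has_derivative_ident] by simp
  have w2: "(w has_derivative D) (at (complex_of_real t) within complex_of_real ` I)"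
    by (rule has_derivative_subset[OF assms(1) assms(4)])
  have "((w \<circ> complex_of_real) has_derivative (D \<circ> complex_of_real)) (at t within I)"
    by (rule diff_chain_within[OF o w2])
  moreover have "D \<circ> complex_of_real = (\<lambda>s. s *\<^sub>R D 1)"
  proof
    fix s :: real
    have lin: "linear D" using has_derivative_linear[OF assms(1)] .
    have "complex_of_real s = s *\<^sub>R 1" by (simp add: scaleR_conv_of_real)
    then show "(D \<circ> complex_of_real) s = s *\<^sub>R D 1"
      using linear_scale[OF lin, of s 1] by simp
  qed
  ultimately show ?thesis using at_within_open[OF assms(3,2)] by (simp add: o_def)
qed

theorem lemma3p5:
  fixes U :: "'a::euclidean_space set"
    and \<alpha> Reeb :: "'a \<Rightarrow> 'a" and J :: "'a \<Rightarrow> 'a \<Rightarrow> 'a"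
    and Ri :: "'a set"
    and w :: "complex \<Rightarrow> 'a" and Dw :: "complex \<Rightarrow> complex \<Rightarrow> 'a"
    and r :: real
  assumes triad: "contact_triad DIM('b::euclidean_space) U \<alpha> Reeb J"
    and leg: "legendrian TYPE('b) U \<alpha> Ri"
    and r_pos: "r > 0"
    and w_smooth: "smooth_on {z. cmod z < r \<and> Im z \<ge> 0} w"
    and w_maps: "\<forall>z. cmod z < r \<and> Im z \<ge> 0 \<longrightarrow> w z \<in> U"
    and w_deriv: "\<forall>z. cmod z < r \<and> Im z \<ge> 0 \<longrightarrow>
                    (w has_derivative Dw z) (at z within {z. cmod z < r \<and> Im z \<ge> 0})"
    and dbar: "\<forall>z h. cmod z < r \<and> Im z \<ge> 0 \<longrightarrow>
                 proj_xi \<alpha> Reeb (w z) (Dw z h)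
                 + J (w z) (proj_xi \<alpha> Reeb (w z) (Dw z (\<i> * h))) = 0"
    and bdry: "\<forall>x::real. \<bar>x\<bar> < r \<longrightarrow> w (complex_of_real x) \<in> Ri"
  shows "\<forall>x::real. \<bar>x\<bar> < r \<longrightarrow>
           (\<forall>v\<in>tangent_space TYPE('b) Ri (w (complex_of_real x)).
              triad_metric \<alpha> Reeb J (w (complex_of_real x)) (Dw (complex_of_real x) \<i>) v = 0)"
proof (intro allI impI ballI)
  fix x :: real and v
  assume x: "\<bar>x\<bar> < r"
  define H where "H = {z. cmod z < r \<and> Im z \<ge> 0}"
  define I where "I = {t::real. \<bar>t\<bar> < r}"
  define p where "p = w (complex_of_real x)"
  define \<gamma> where "\<gamma> = (\<lambda>t::real. w (complex_of_real t))"
  assume "v \<in> tangent_space TYPE('b) Ri (w (complex_of_real x))"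
  then obtain V and W :: "'b set" and \<phi> u h where ch: "submfd_chart Ri V W \<phi>" and u: "u \<in> W" "\<phi> u = p"
      and vh: "v = frechet_derivative \<phi> (at u) h"
    unfolding tangent_space_def p_def by blast
  have IH: "complex_of_real ` I \<subseteq> H" by (auto simp: I_def H_def)
  have openI: "open I" unfolding I_def
    using open_ball[of "0::real" r] by (simp add: ball_def dist_real_def)
  have xI: "x \<in> I" using x by (simp add: I_def)
  have inH: "complex_of_real t \<in> H" if "t \<in> I" for t using IH that by blast
  have openU: "open U" and smU: "smooth_on U \<alpha>"
    using triad by (auto simp: contact_triad_def contact_form_def)
  have pU: "p \<in> U" using w_maps x by (simp add: p_def)
  have reeb1: "\<alpha> p \<bullet> Reeb p = 1"
    using triad pU by (auto simp: contact_triad_def reeb_field_def form_app_def)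
  have Jlin: "linear (J p)" using triad pU by (auto simp: contact_triad_def)
  have Jxi: "\<And>Y. \<alpha> p \<bullet> Y = 0 \<Longrightarrow> \<alpha> p \<bullet> J p Y = 0 \<and> J p (J p Y) = - Y"
    using triad pU by (auto simp: contact_triad_def contact_distr_def form_app_def)
  have Jsym: "\<And>Y Z. \<alpha> p \<bullet> Y = 0 \<Longrightarrow> \<alpha> p \<bullet> Z = 0 \<Longrightarrow> dform \<alpha> p Y (J p Z) = dform \<alpha> p Z (J p Y)"
    using triad pU by (auto simp: contact_triad_def contact_distr_def form_app_def)
  obtain Da1 Da2 where Da1: "\<And>q. q\<in>U \<Longrightarrow> (\<alpha> has_derivative Da1 q) (at q)"
    and "\<And>x h. x\<in>U \<Longrightarrow> ((\<lambda>y. Da1 y h) has_derivative Da2 x h) (at x)"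
    and "\<And>h k. continuous_on U (\<lambda>x. Da2 x h k)"
    using smooth_C2[OF smU openU] by blast
  define Da where "Da = frechet_derivative \<alpha> (at p)"
  have daa: "(\<alpha> has_derivative Da) (at p)"
    using Da1[OF pU] frechet_derivative_at[OF Da1[OF pU]] by (simp add: Da_def)
  have Dalin: "linear Da" using has_derivative_linear[OF daa] .
  have legT: "\<And>q y. q \<in> Ri \<Longrightarrow> y \<in> tangent_space TYPE('b) Ri q \<Longrightarrow> \<alpha> q \<bullet> y = 0"
    using leg by (auto simp: legendrian_def contact_distr_def form_app_def)
  have chV: "open V" and chW: "open W" and smphi: "smooth_on W \<phi>" and img: "\<phi> ` W = Ri \<inter> V"
    and injphi: "inj_on \<phi> W" and cinv: "continuous_on (Ri \<inter> V) (inv_into W \<phi>)"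
    and injD: "\<And>y. y\<in>W \<Longrightarrow> inj (frechet_derivative \<phi> (at y))"
    using ch by (auto simp: submfd_chart_def)
  obtain D1 D2 where D1: "\<And>y. y\<in>W \<Longrightarrow> (\<phi> has_derivative D1 y) (at y)"
    and "\<And>x h. x\<in>W \<Longrightarrow> ((\<lambda>y. D1 y h) has_derivative D2 x h) (at x)"
    and "\<And>h k. continuous_on W (\<lambda>x. D2 x h k)"
    using smooth_C2[OF smphi chW] by blast
  have fdphi: "\<And>y. y\<in>W \<Longrightarrow> (\<phi> has_derivative frechet_derivative \<phi> (at y)) (at y)"
    using D1 frechet_derivative_at by metis
  have tang: "frechet_derivative \<phi> (at y) k \<in> tangent_space TYPE('b) Ri (\<phi> y)" if "y \<in> W" for y k
    unfolding tangent_space_def using ch that by blast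
  have phiRi: "\<phi> y \<in> Ri" if "y \<in> W" for y using img that by blast
  have iso: "\<forall>y\<in>W. \<forall>k. \<alpha> (\<phi> y) \<bullet> frechet_derivative \<phi> (at y) k = 0"
    using legT[OF phiRi tang] by blast
  have gder: "(\<gamma> has_derivative (\<lambda>s. s *\<^sub>R Dw (complex_of_real t) 1)) (at t)" if "t \<in> I" for t
    unfolding \<gamma>_def
    by (rule curve_deriv[OF _ openI that IH]) (use w_deriv inH[OF that] in \<open>auto simp: H_def\<close>)
  have gcont: "continuous_on I \<gamma>"
    using gder has_derivative_continuous continuous_at_imp_continuous_on by blast
  define T where "T = I \<inter> \<gamma> -` V"
  have openT: "open T" unfolding T_def by (rule continuous_open_preimage[OF gcont openI chV])
  have pV: "p \<in> V" using img u by blast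
  have xT: "x \<in> T" using xI pV by (simp add: T_def \<gamma>_def p_def)
  have gRV: "\<gamma> t \<in> Ri \<inter> V" if "t \<in> T" for t
    using that bdry by (auto simp: T_def I_def \<gamma>_def)
  define c where "c = inv_into W \<phi> \<circ> \<gamma>"
  have gphic: "\<gamma> t = \<phi> (c t)" if "t \<in> T" for t
    using gRV[OF that] img by (simp add: c_def f_inv_into_f)
  have ccont: "continuous (at x) c"
  proof -
    have s1: "\<gamma> ` T \<subseteq> Ri \<inter> V" using gRV by blast
    have s2: "T \<subseteq> I" by (auto simp: T_def)
    have "continuous_on T c" unfolding c_def
      by (rule continuous_on_compose[OF continuous_on_subset[OF gcont s2] continuous_on_subset[OF cinv s1]])
    then show ?thesis using openT xT continuous_on_eq_continuous_at by blast
  qed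
  have c0: "c x = u"
    using inv_into_f_f[OF injphi u(1)] u(2) by (simp add: c_def \<gamma>_def p_def[symmetric])
  define g where "g = Dw (complex_of_real x) 1"
  have "g \<in> range (frechet_derivative \<phi> (at u))"
    unfolding g_def
    by (rule curve_tangent[OF fdphi[OF u(1)] injD[OF u(1)] gder[OF xI] ccont c0 openT xT gphic])
  then obtain k where gk: "g = frechet_derivative \<phi> (at u) k" by blast
  have isoD: "Da g \<bullet> v = Da v \<bullet> g"
    unfolding gk vh Da_def
    using isotropic[OF smphi chW u(1) _ iso] daa u(2) unfolding Da_def by (metis inner_commute)
  have dfgv: "dform \<alpha> p g v = 0"
    using isoD by (simp add: dform_def Da_def[symmetric] inner_commute)
  have pRi: "p \<in> Ri" using phiRi u by metis
  have av: "\<alpha> p \<bullet> v = 0" using legT[OF pRi] tang[OF u(1)] u(2) vh by metis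
  have ag: "\<alpha> p \<bullet> g = 0" using legT[OF pRi] tang[OF u(1)] u(2) gk by metis
  define b where "b = Dw (complex_of_real x) \<i>"
  define Pb where "Pb = proj_xi \<alpha> Reeb p b"
  have aPb: "\<alpha> p \<bullet> Pb = 0"
    using reeb1 by (simp add: Pb_def proj_xi_def form_app_def inner_diff_right)
  have Pg: "proj_xi \<alpha> Reeb p g = g" using ag by (simp add: proj_xi_def form_app_def)
  have Pv: "proj_xi \<alpha> Reeb p v = v" using av by (simp add: proj_xi_def form_app_def)
  have "g + J p Pb = 0"
    using dbar[rule_format, of "complex_of_real x" 1] x Pg
    by (simp add: g_def Pb_def b_def p_def)
  then have gJ: "g = - J p Pb" by (simp add: eq_neg_iff_add_eq_0)
  have Jg: "J p g = Pb"
    using gJ linear_neg[OF Jlin] Jxi[OF aPb] by simp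
  have aJg: "\<alpha> p \<bullet> J p g = 0" using Jxi[OF ag] by simp
  have JJg: "J p (J p g) = - g" using Jxi[OF ag] by simp
  have "triad_metric \<alpha> Reeb J p b v = dform \<alpha> p Pb (J p v)"
    by (simp add: triad_metric_def Pb_def[symmetric] Pv form_app_def av)
  also have "\<dots> = dform \<alpha> p (J p g) (J p v)" by (simp add: Jg)
  also have "\<dots> = dform \<alpha> p v (J p (J p g))" using Jsym[OF av aJg] by simp
  also have "\<dots> = dform \<alpha> p v (- g)" by (simp add: JJg)
  also have "\<dots> = dform \<alpha> p g v"
    using linear_neg[OF Dalin] by (simp add: dform_def Da_def[symmetric])
  also have "\<dots> = 0" by (rule dfgv)
  finally show "triad_metric \<alpha> Reeb J (w (complex_of_real x)) (Dw (complex_of_real x) \<i>) v = 0"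
    by (simp add: p_def b_def)
qed

end
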